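(* Let $m\ge 1$ and $n\ge 2$ be integers. Assume that $G$ is a topological group such that $c_0(G)=c(G)$ and this subgroup has index $n$ in $G$. Then a space $X$ has precisely $m$ connected components if and only if the connected component $c(C_p(X,G))$ of the identity has index $n^m$ in $C_p(X,G)$.
   Context: All spaces are Tychonoff and non-empty; topological groups are Hausdorff. For a topological group $K$, $c(K)$ is the connected component of the identity and $c_0(K)$ is the pathwise connected component of the identity (union of all pathwise connected subsets containing the identity). $C_p(X,G)$ is the group of continuous maps $X\to G$ with pointwise operations and the topology of pointwise convergence. *)

theory Defs
  imports "HOL-Analysis.Analysis" "HOL-Algebra.Group" "HOL-Algebra.Coset"
begin

definition tychonoff_space :: "'a topology \<Rightarrow> bool" where
  "tychonoff_space X \<longleftrightarrow> completely_regular_space X \<and> t1_space X"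

definition topological_group :: "('g, 'b) monoid_scheme \<Rightarrow> 'g topology \<Rightarrow> bool" where
  "topological_group G T \<longleftrightarrow>
     group G \<and> topspace T = carrier G \<and> Hausdorff_space T \<and>
     continuous_map (prod_topology T T) T (\<lambda>(x, y). x \<otimes>\<^bsub>G\<^esub> y) \<and>
     continuous_map T T (\<lambda>x. inv\<^bsub>G\<^esub> x)"

definition Cp_group :: "'a topology \<Rightarrow> ('g, 'b) monoid_scheme \<Rightarrow> 'g topology \<Rightarrow> ('a \<Rightarrow> 'g) monoid" where
  "Cp_group X G T =
     \<lparr> carrier = {f. continuous_map X T f \<and> f \<in> extensional (topspace X)},
       mult = (\<lambda>f g. restrict (\<lambda>x. f x \<otimes>\<^bsub>G\<^esub> g x) (topspace X)),
       one = restrict (\<lambda>x. \<one>\<^bsub>G\<^esub>) (topspace X) \<rparr>"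

definition Cp_topology :: "'a topology \<Rightarrow> ('g, 'b) monoid_scheme \<Rightarrow> 'g topology \<Rightarrow> ('a \<Rightarrow> 'g) topology" where
  "Cp_topology X G T =
     subtopology (product_topology (\<lambda>_. T) (topspace X)) (carrier (Cp_group X G T))"

end

theory Submission
  imports Defs
begin


lemma tg_group: "topological_group G T \<Longrightarrow> group G"
  by (simp add: topological_group_def)

lemma tg_top: "topological_group G T \<Longrightarrow> topspace T = carrier G"
  by (simp add: topological_group_def)

lemma tg_mult:
  assumes "topological_group G T" "continuous_map Z T f" "continuous_map Z T g"
  shows "continuous_map Z T (\<lambda>x. f x \<otimes>\<^bsub>G\<^esub> g x)"
proof -
  have "continuous_map Z (prod_topology T T) (\<lambda>x. (f x, g x))"
    using assms by (simp add: continuous_map_pairwise o_def)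
  moreover have "continuous_map (prod_topology T T) T (\<lambda>(x, y). x \<otimes>\<^bsub>G\<^esub> y)"
    using assms(1) by (simp add: topological_group_def)
  ultimately have "continuous_map Z T ((\<lambda>(x, y). x \<otimes>\<^bsub>G\<^esub> y) \<circ> (\<lambda>x. (f x, g x)))"
    by (rule continuous_map_compose)
  then show ?thesis by (simp add: o_def)
qed

lemma tg_inv:
  assumes "topological_group G T" "continuous_map Z T f"
  shows "continuous_map Z T (\<lambda>x. inv\<^bsub>G\<^esub> f x)"
proof -
  have "continuous_map T T (\<lambda>x. inv\<^bsub>G\<^esub> x)"
    using assms(1) by (simp add: topological_group_def)
  from continuous_map_compose[OF assms(2) this] show ?thesis by (simp add: o_def)
qed

lemma tg_subgroup:
  fixes G (structure)
  assumes TG: "topological_group G T"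
  shows "subgroup (connected_component_of_set T \<one>\<^bsub>G\<^esub>) G"
proof -
  interpret group G using TG by (simp add: topological_group_def)
  let ?P = "connected_component_of_set T \<one>\<^bsub>G\<^esub>"
  have top: "topspace T = carrier G" using TG by (simp add: topological_group_def)
  have sub: "?P \<subseteq> carrier G"
    by (metis connected_component_of_subset_topspace top)
  have one: "\<one> \<in> ?P" using top by (simp add: connected_component_of_refl)
  have conP: "connectedin T ?P" by (rule connectedin_connected_component_of)
  show ?thesis
  proof
    show "?P \<subseteq> carrier G" by (rule sub)
    show "\<one> \<in> ?P" by (rule one)
  next
    fix a b assume a: "a \<in> ?P" and b: "b \<in> ?P"
    have bc: "b \<in> carrier G" using b sub by blast
    have cm: "continuous_map T T (\<lambda>x. x \<otimes> b)"
      using tg_mult[OF TG continuous_map_id, of "\<lambda>_. b"] bc top by simp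
    have "connectedin T ((\<lambda>x. x \<otimes> b) ` ?P)"
      by (rule connectedin_continuous_map_image[OF cm conP])
    moreover have "b \<in> (\<lambda>x. x \<otimes> b) ` ?P" using one bc by (metis image_eqI l_one)
    moreover have "a \<otimes> b \<in> (\<lambda>x. x \<otimes> b) ` ?P" using a by blast
    ultimately have "connected_component_of T b (a \<otimes> b)"
      unfolding connected_component_of_def by blast
    then show "a \<otimes> b \<in> ?P" using b connected_component_of_trans by fastforce
  next
    fix a assume a: "a \<in> ?P"
    have cm: "continuous_map T T (\<lambda>x. inv x)"
      using TG by (simp add: topological_group_def)
    have "connectedin T ((\<lambda>x. inv x) ` ?P)"
      by (rule connectedin_continuous_map_image[OF cm conP])
    moreover have "\<one> \<in> (\<lambda>x. inv x) ` ?P" using one by (metis image_eqI inv_one)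
    ultimately show "inv a \<in> ?P"
      using a connected_component_of_maximal by (metis image_eqI subsetD)
  qed
qed




lemma cont_restrict:
  "continuous_map X T f \<Longrightarrow> continuous_map X T (restrict f (topspace X))"
  by (erule continuous_map_eq) simp


lemma loc_const_cont:
  assumes "f \<in> topspace X \<rightarrow> topspace Y"
    and "\<And>x. x \<in> topspace X \<Longrightarrow> \<exists>U. openin X U \<and> x \<in> U \<and> (\<forall>y\<in>U. f y = f x)"
  shows "continuous_map X Y f"
  unfolding continuous_map_def
proof (intro conjI allI impI)
  show "f \<in> topspace X \<rightarrow> topspace Y" by (rule assms(1))
  fix V assume "openin Y V"
  show "openin X {x \<in> topspace X. f x \<in> V}"
    unfolding openin_subopen[of X "{x \<in> topspace X. f x \<in> V}"]
  proof
    fix x assume x: "x \<in> {x \<in> topspace X. f x \<in> V}"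
    then obtain U where U: "openin X U" "x \<in> U" "\<forall>y\<in>U. f y = f x" using assms(2) by blast
    have "U \<subseteq> {x \<in> topspace X. f x \<in> V}"
    proof
      fix y assume y: "y \<in> U"
      have "y \<in> topspace X" using openin_subset[OF U(1)] y by blast
      moreover have "f y = f x" using U(3) y by blast
      ultimately show "y \<in> {x \<in> topspace X. f x \<in> V}" using x by simp
    qed
    then show "\<exists>T. openin X T \<and> x \<in> T \<and> T \<subseteq> {x \<in> topspace X. f x \<in> V}" using U by blast
  qed
qed

lemma card_quot:
  assumes "\<And>f g. f \<in> A \<Longrightarrow> g \<in> A \<Longrightarrow> R f = R g \<longleftrightarrow> Q f = Q g"
  shows "card (R ` A) = card (Q ` A)"
proof -
  define s where "s c = (SOME f. f \<in> A \<and> R f = c)" for c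
  have s: "s (R f) \<in> A \<and> R (s (R f)) = R f" if "f \<in> A" for f
    unfolding s_def by (rule someI[of _ f]) (use that in auto)
  have "bij_betw (\<lambda>c. Q (s c)) (R ` A) (Q ` A)"
    unfolding bij_betw_def inj_on_def
  proof (intro conjI ballI impI)
    fix c d assume "c \<in> R ` A" "d \<in> R ` A" "Q (s c) = Q (s d)"
    then obtain f g where "f \<in> A" "g \<in> A" "c = R f" "d = R g" "Q (s (R f)) = Q (s (R g))" by auto
    then show "c = d" using s assms by metis
  next
    show "(\<lambda>c. Q (s c)) ` R ` A = Q ` A"
    proof
      show "(\<lambda>c. Q (s c)) ` R ` A \<subseteq> Q ` A" using s by auto
      show "Q ` A \<subseteq> (\<lambda>c. Q (s c)) ` R ` A"
      proof
        fix y assume "y \<in> Q ` A"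
        then obtain f where f: "f \<in> A" "y = Q f" by auto
        have "Q (s (R f)) = Q f" using s[OF f(1)] assms f(1) by metis
        then show "y \<in> (\<lambda>c. Q (s c)) ` R ` A" using f by force
      qed
    qed
  qed
  then show ?thesis by (rule bij_betw_same_card)
qed

locale cpsetting =
  fixes X :: "'a topology" and G :: "('g, 'b) monoid_scheme" (structure) and T :: "'g topology"
  assumes TG: "topological_group G T"
begin

abbreviation P where "P \<equiv> connected_component_of_set T \<one>"
abbreviation CG where "CG \<equiv> Cp_group X G T"
abbreviation tau where "tau \<equiv> Cp_topology X G T"
definition H where "H = {f \<in> carrier CG. \<forall>x\<in>topspace X. f x \<in> P}"

lemma grp: "group G" using TG by (simp add: topological_group_def)
lemma top: "topspace T = carrier G" using TG by (simp add: topological_group_def)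
lemma subP: "subgroup P G" using tg_subgroup[OF TG] .
lemma P_carr: "P \<subseteq> carrier G" using subgroup.subset[OF subP] .

lemma carrier_CG: "carrier CG = {f. continuous_map X T f \<and> f \<in> extensional (topspace X)}"
  by (simp add: Cp_group_def)
lemma mult_CG: "f \<otimes>\<^bsub>CG\<^esub> g = restrict (\<lambda>x. f x \<otimes> g x) (topspace X)"
  by (simp add: Cp_group_def)
lemma one_CG: "\<one>\<^bsub>CG\<^esub> = restrict (\<lambda>x. \<one>) (topspace X)"
  by (simp add: Cp_group_def)

lemma carrier_CG_iff: "f \<in> carrier CG \<longleftrightarrow> continuous_map X T f \<and> f \<in> extensional (topspace X)"
  by (simp add: carrier_CG)

lemma one_in: "\<one>\<^bsub>CG\<^esub> \<in> carrier CG"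
proof -
  have "continuous_map X T (\<lambda>x. \<one>)"
    using top group.is_monoid[OF grp] by (simp add: monoid.one_closed)
  then show ?thesis unfolding carrier_CG_iff one_CG by (simp add: cont_restrict)
qed

lemma cont_val: "f \<in> carrier CG \<Longrightarrow> x \<in> topspace X \<Longrightarrow> f x \<in> carrier G"
  using continuous_map_image_subset_topspace top unfolding carrier_CG_iff by blast

lemma mult_in: "f \<in> carrier CG \<Longrightarrow> g \<in> carrier CG \<Longrightarrow> f \<otimes>\<^bsub>CG\<^esub> g \<in> carrier CG"
  unfolding carrier_CG_iff mult_CG
  by (auto intro: cont_restrict tg_mult[OF TG])

lemma top_tau: "topspace tau = carrier CG"
proof -
  have "carrier CG \<subseteq> (\<Pi>\<^sub>E i\<in>topspace X. topspace T)"
    using cont_val top by (auto simp: PiE_iff carrier_CG_iff extensional_def)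
  then show ?thesis unfolding Cp_topology_def by auto
qed

lemma eval_cont: "x \<in> topspace X \<Longrightarrow> continuous_map tau T (\<lambda>f. f x)"
  unfolding Cp_topology_def
  by (intro continuous_map_from_subtopology continuous_map_product_projection)

lemma compA:
  assumes "f \<in> connected_component_of_set tau \<one>\<^bsub>CG\<^esub>" "x \<in> topspace X"
  shows "f x \<in> P"
proof -
  obtain S where S: "connectedin tau S" "\<one>\<^bsub>CG\<^esub> \<in> S" "f \<in> S"
    using assms(1) unfolding connected_component_of_def by blast
  have "connectedin T ((\<lambda>f. f x) ` S)"
    by (rule connectedin_continuous_map_image[OF eval_cont[OF assms(2)] S(1)])
  moreover have "\<one> \<in> (\<lambda>f. f x) ` S"
  proof (rule image_eqI)
    show "\<one> = \<one>\<^bsub>CG\<^esub> x" using assms(2) by (simp add: one_CG)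
  qed (rule S(2))
  moreover have "f x \<in> (\<lambda>f. f x) ` S" using S(3) by blast
  ultimately show ?thesis unfolding connected_component_of_def by blast
qed

lemma c_sub_H: "connected_component_of_set tau \<one>\<^bsub>CG\<^esub> \<subseteq> H"
proof
  fix f assume f: "f \<in> connected_component_of_set tau \<one>\<^bsub>CG\<^esub>"
  have "f \<in> carrier CG"
    using connected_component_of_subset_topspace[of tau] top_tau f by (metis subsetD)
  then show "f \<in> H" unfolding H_def using compA[OF f] by blast
qed

lemma cont_into_tau:
  assumes "\<And>t. t \<in> {0..1} \<Longrightarrow> p t \<in> carrier CG"
    and "\<And>x. x \<in> topspace X \<Longrightarrow> continuous_map (top_of_set {0..1::real}) T (\<lambda>t. p t x)"
  shows "continuous_map (top_of_set {0..1::real}) tau p"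
  unfolding Cp_topology_def continuous_map_in_subtopology
proof
  show "p \<in> topspace (top_of_set {0..1::real}) \<rightarrow> carrier CG" using assms(1) by auto
  show "continuous_map (top_of_set {0..1::real}) (product_topology (\<lambda>_. T) (topspace X)) p"
    unfolding continuous_map_componentwise
  proof
    show "p ` topspace (top_of_set {0..1::real}) \<subseteq> extensional (topspace X)"
      using assms(1) by (auto simp: carrier_CG_iff)
  qed (use assms(2) in auto)
qed

lemma cont_from_tau:
  "continuous_map Z tau p \<Longrightarrow> x \<in> topspace X \<Longrightarrow> continuous_map Z T (\<lambda>t. p t x)"
  using continuous_map_compose[OF _ eval_cont, of Z p x] by (simp add: o_def)

lemma one_P: "\<one> \<in> P"
  using top group.is_monoid[OF grp] by (simp add: connected_component_of_refl monoid.one_closed)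

lemma one_H: "\<one>\<^bsub>CG\<^esub> \<in> H"
  unfolding H_def using one_in one_P by (simp add: one_CG)

lemma cosetEq:
  assumes "a \<in> carrier G" "b \<in> carrier G"
  shows "P #> a = P #> b \<longleftrightarrow> b \<otimes> inv a \<in> P"
proof
  interpret group G by (rule grp)
  assume "P #> a = P #> b"
  then have "b \<in> P #> a" using rcos_self[OF assms(2) subP] by simp
  then show "b \<otimes> inv a \<in> P" using subgroup.rcos_module[OF subP grp assms] by simp
next
  interpret group G by (rule grp)
  assume "b \<otimes> inv a \<in> P"
  then have "b \<in> P #> a" using subgroup.rcos_module[OF subP grp assms] by simp
  then show "P #> a = P #> b" using repr_independence[OF _ assms(1) subP] by simp
qed

lemma one_mult_CG: "g \<in> carrier CG \<Longrightarrow> \<one>\<^bsub>CG\<^esub> \<otimes>\<^bsub>CG\<^esub> g = g"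
  using cont_val group.is_monoid[OF grp]
  by (auto simp: mult_CG one_CG fun_eq_iff carrier_CG_iff extensional_def monoid.l_one)

definition fU where "fU a U = restrict (\<lambda>x. if x \<in> U then a else \<one>) (topspace X)"

lemma fU_carrier:
  assumes "a \<in> carrier G" "closedin X U" "openin X U"
  shows "fU a U \<in> carrier CG"
proof -
  have one: "\<one> \<in> carrier G" using group.is_monoid[OF grp] by (simp add: monoid.one_closed)
  have "continuous_map X T (\<lambda>x. if x \<in> U then a else \<one>)"
  proof (rule loc_const_cont)
    show "(\<lambda>x. if x \<in> U then a else \<one>) \<in> topspace X \<rightarrow> topspace T" using assms(1) one top by auto
    fix x assume x: "x \<in> topspace X"
    show "\<exists>W. openin X W \<and> x \<in> W \<and> (\<forall>y\<in>W. (if y \<in> U then a else \<one>) = (if x \<in> U then a else \<one>))"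
    proof (cases "x \<in> U")
      case True then show ?thesis using assms(3) by (intro exI[of _ U]) auto
    next
      case False
      have "openin X (topspace X - U)" using assms(2) by blast
      then show ?thesis using False x by (intro exI[of _ "topspace X - U"]) auto
    qed
  qed
  then show ?thesis unfolding carrier_CG_iff fU_def by (simp add: cont_restrict)
qed

lemma lemmaI:
  assumes fin: "finite (rcosets\<^bsub>CG\<^esub> (connected_component_of_set tau \<one>\<^bsub>CG\<^esub>))"
    and a: "a \<in> carrier G" "a \<notin> P"
  shows "finite (connected_components_of X)"
proof -
  interpret group G by (rule grp)
  let ?C = "connected_component_of_set tau \<one>\<^bsub>CG\<^esub>"
  let ?Clo = "{U. closedin X U \<and> openin X U}"
  have one: "\<one> \<in> carrier G" by simp
  have inj: "inj_on (\<lambda>U. ?C #>\<^bsub>CG\<^esub> fU a U) ?Clo"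
  proof (rule inj_onI)
    fix U V assume U: "U \<in> ?Clo" and V: "V \<in> ?Clo" and eq: "?C #>\<^bsub>CG\<^esub> fU a U = ?C #>\<^bsub>CG\<^esub> fU a V"
    have oneC: "\<one>\<^bsub>CG\<^esub> \<in> ?C" using one_in top_tau by (simp add: connected_component_of_refl)
    have "fU a V \<in> ?C #>\<^bsub>CG\<^esub> fU a V"
      unfolding r_coset_def using oneC one_mult_CG[OF fU_carrier[OF a(1)]] V by force
    then have "fU a V \<in> ?C #>\<^bsub>CG\<^esub> fU a U" using eq by simp
    then obtain h where h: "h \<in> ?C" "fU a V = h \<otimes>\<^bsub>CG\<^esub> fU a U" unfolding r_coset_def by blast
    have hx: "fU a V x = h x \<otimes> fU a U x" "h x \<in> P" if "x \<in> topspace X" for x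
      using h that compA[OF h(1) that] by (auto simp: mult_CG)
    have UX: "U \<subseteq> topspace X" and VX: "V \<subseteq> topspace X" using U V closedin_subset by auto
    show "U = V"
    proof (rule ccontr)
      assume "U \<noteq> V"
      then obtain x where x: "x \<in> topspace X" "(x \<in> U \<and> x \<notin> V) \<or> (x \<in> V \<and> x \<notin> U)" using UX VX by blast
      have hc: "h x \<in> carrier G" using hx(2)[OF x(1)] P_carr by auto
      from x(2) show False
      proof
        assume "x \<in> U \<and> x \<notin> V"
        then have "\<one> = h x \<otimes> a" using hx(1)[OF x(1)] x(1) by (simp add: fU_def)
        then have "inv a = h x" using hc a(1) by (metis inv_equality)
        then have "inv (inv a) \<in> P" using hx(2)[OF x(1)] subgroup.m_inv_closed[OF subP] by metis
        then show False using a by simp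
      next
        assume "x \<in> V \<and> x \<notin> U"
        then have "a = h x \<otimes> \<one>" using hx(1)[OF x(1)] x(1) by (simp add: fU_def)
        then show False using a(2) hx(2)[OF x(1)] hc by simp
      qed
    qed
  qed
  have "(\<lambda>U. ?C #>\<^bsub>CG\<^esub> fU a U) ` ?Clo \<subseteq> rcosets\<^bsub>CG\<^esub> ?C"
    unfolding RCOSETS_def using fU_carrier[OF a(1)] by blast
  then have "finite ((\<lambda>U. ?C #>\<^bsub>CG\<^esub> fU a U) ` ?Clo)" using fin finite_subset by blast
  then have finClo: "finite ?Clo" using inj finite_imageD by blast
  define Q where "Q x = {U \<in> ?Clo. x \<in> U}" for x
  define g where "g S = {y \<in> topspace X. Q y = S}" for S
  have "quasi_components_of X \<subseteq> g ` Pow ?Clo"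
  proof
    fix K assume "K \<in> quasi_components_of X"
    then obtain x where x: "x \<in> topspace X" "K = quasi_component_of_set X x"
      unfolding quasi_components_of_def by blast
    have "K = g (Q x)"
      unfolding x(2) g_def Q_def quasi_component_of_def using x(1) by auto
    moreover have "Q x \<in> Pow ?Clo" unfolding Q_def by blast
    ultimately show "K \<in> g ` Pow ?Clo" by blast
  qed
  then have "finite (quasi_components_of X)" using finClo finite_subset by blast
  then show ?thesis using quasi_eq_connected_components_of by metis
qed

end

locale cpB = cpsetting +
  assumes pc: "path_component_of_set T \<one> = P"
    and tych: "tychonoff_space X"
begin

lemma path_in_P:
  assumes "pathin T g" "g 0 = \<one>" "t \<in> {0..1}"
  shows "g t \<in> P"
proof -
  have "connectedin T (g ` {0..1})" by (rule connectedin_path_image[OF assms(1)])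
  moreover have "\<one> \<in> g ` {0..1}" using assms(2) by force
  ultimately have "g ` {0..1} \<subseteq> P" by (rule connected_component_of_maximal)
  then show ?thesis using assms(3) by blast
qed

lemma B2:
  assumes "finite F"
  shows "F \<subseteq> topspace X \<Longrightarrow> f \<in> H \<Longrightarrow> \<exists>p. continuous_map (top_of_set {0..1::real}) tau p \<and>
     p 0 = \<one>\<^bsub>CG\<^esub> \<and> (\<forall>t\<in>{0..1}. p t \<in> H) \<and> (\<forall>x\<in>F. p 1 x = f x)"
  using assms
proof (induction F rule: finite_induct)
  case empty
  show ?case
    by (rule exI[of _ "\<lambda>t. \<one>\<^bsub>CG\<^esub>"]) (simp add: top_tau one_in one_H)
next
  case (insert a F)
  interpret group G by (rule grp)
  have aX: "a \<in> topspace X" and FX: "F \<subseteq> topspace X" using insert.prems by auto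
  obtain p' where p': "continuous_map (top_of_set {0..1::real}) tau p'"
    "p' 0 = \<one>\<^bsub>CG\<^esub>" "\<forall>t\<in>{0..1}. p' t \<in> H" "\<forall>x\<in>F. p' 1 x = f x"
    using insert.IH[OF FX insert.prems(2)] by blast
  have p'H: "p' t \<in> carrier CG" "\<And>x. x \<in> topspace X \<Longrightarrow> p' t x \<in> P" if "t \<in> {0..1}" for t
    using p'(3) that unfolding H_def by auto
  have fH: "f \<in> carrier CG" "\<And>x. x \<in> topspace X \<Longrightarrow> f x \<in> P"
    using insert.prems(2) unfolding H_def by auto
  have p'a: "p' 1 a \<in> P" using p'H(2)[of 1 a] aX by simp
  have fa: "f a \<in> P" using fH(2) aX by simp
  define b where "b = inv (p' 1 a) \<otimes> f a"
  have bP: "b \<in> P" unfolding b_def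
    using p'a fa subgroup.m_closed[OF subP] subgroup.m_inv_closed[OF subP] by blast
  then have "path_component_of T \<one> b" using pc by blast
  then obtain \<gamma> where g: "pathin T \<gamma>" "\<gamma> 0 = \<one>" "\<gamma> 1 = b"
    unfolding path_component_of_def by blast
  have gP: "\<gamma> s \<in> P" if "s \<in> {0..1}" for s using path_in_P[OF g(1,2) that] .
  have gcont: "continuous_map (top_of_set {0..1::real}) T \<gamma>" using g(1) by (simp add: pathin_def)
  have crs: "completely_regular_space X" "t1_space X" using tych by (auto simp: tychonoff_space_def)
  have "closedin X F" using crs(2) FX insert.hyps(1) t1_space_closedin_finite by blast
  moreover have "a \<in> topspace X - F" using aX insert.hyps(2) by blast
  ultimately obtain \<phi> :: "'a \<Rightarrow> real" where phi: "continuous_map X (top_of_set {0..1}) \<phi>"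
    "\<phi> a = 0" "\<phi> ` F \<subseteq> {1}"
    using crs(1) unfolding completely_regular_space_def by blast
  have phi01: "\<phi> x \<in> {0..1}" if "x \<in> topspace X" for x
    using continuous_map_image_subset_topspace[OF phi(1)] that by auto
  have phiR: "continuous_map X euclideanreal \<phi>"
    using phi(1) by (simp add: continuous_map_in_subtopology)
  have q01: "t * (1 - \<phi> x) \<in> {0..1}" if "t \<in> {0..1}" "x \<in> topspace X" for t x
    using phi01[OF that(2)] that(1) by (auto intro: mult_le_one mult_nonneg_nonneg)
  define p where "p t = restrict (\<lambda>x. p' t x \<otimes> \<gamma> (t * (1 - \<phi> x))) (topspace X)" for t
  have contX: "continuous_map X T (\<lambda>x. p' t x \<otimes> \<gamma> (t * (1 - \<phi> x)))" if t: "t \<in> {0..1}" for t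
  proof (rule tg_mult[OF TG])
    show "continuous_map X T (p' t)" using p'H(1)[OF t] by (simp add: carrier_CG_iff)
    have "continuous_map X (top_of_set {0..1}) (\<lambda>x. t * (1 - \<phi> x))"
      unfolding continuous_map_in_subtopology
    proof
      show "continuous_map X euclideanreal (\<lambda>x. t * (1 - \<phi> x))"
        by (intro continuous_map_real_mult_left continuous_map_diff phiR continuous_map_const[THEN iffD2]) simp
      show "(\<lambda>x. t * (1 - \<phi> x)) \<in> topspace X \<rightarrow> {0..1}" using q01[OF t] by auto
    qed
    from continuous_map_compose[OF this gcont]
    show "continuous_map X T (\<lambda>x. \<gamma> (t * (1 - \<phi> x)))" by (simp add: o_def)
  qed
  have pC: "p t \<in> carrier CG" if "t \<in> {0..1}" for t
    unfolding carrier_CG_iff p_def using cont_restrict[OF contX[OF that]] by simp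
  have pH: "p t \<in> H" if t: "t \<in> {0..1}" for t
    unfolding H_def using pC[OF t] p'H(2)[OF t] gP q01[OF t]
      subgroup.m_closed[OF subP] by (auto simp: p_def)
  have pcont: "continuous_map (top_of_set {0..1::real}) tau p"
  proof (rule cont_into_tau)
    show "p t \<in> carrier CG" if "t \<in> {0..1}" for t using pC that by simp
    fix x assume x: "x \<in> topspace X"
    have c1: "continuous_map (top_of_set {0..1::real}) T (\<lambda>t. p' t x)"
      by (rule cont_from_tau[OF p'(1) x])
    have "continuous_map (top_of_set {0..1::real}) (top_of_set {0..1}) (\<lambda>t. t * (1 - \<phi> x))"
      unfolding continuous_map_in_subtopology
    proof
      show "continuous_map (top_of_set {0..1::real}) euclideanreal (\<lambda>t. t * (1 - \<phi> x))"
        by (simp add: continuous_on_mult_right continuous_on_id)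
      show "(\<lambda>t. t * (1 - \<phi> x)) \<in> topspace (top_of_set {0..1::real}) \<rightarrow> {0..1}"
        using q01 x by auto
    qed
    from continuous_map_compose[OF this gcont]
    have c2: "continuous_map (top_of_set {0..1::real}) T (\<lambda>t. \<gamma> (t * (1 - \<phi> x)))" by (simp add: o_def)
    show "continuous_map (top_of_set {0..1::real}) T (\<lambda>t. p t x)"
      using tg_mult[OF TG c1 c2] x by (simp add: p_def)
  qed
  have p0: "p 0 = \<one>\<^bsub>CG\<^esub>"
    unfolding p_def p'(2) one_CG using g(2) by (auto simp: fun_eq_iff)
  have p1: "\<forall>x\<in>insert a F. p 1 x = f x"
  proof
    fix x assume x: "x \<in> insert a F"
    show "p 1 x = f x"
    proof (cases "x = a")
      case True
      have "p' 1 a \<in> carrier G" "f a \<in> carrier G" using p'a fa P_carr by auto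
      then show ?thesis using True aX
        by (simp add: p_def phi(2) g(3) b_def m_assoc[symmetric])
    next
      case False
      then have xF: "x \<in> F" using x by blast
      then have "\<phi> x = 1" using phi(3) by blast
      moreover have "p' 1 x \<in> carrier G" using p'H(2)[of 1 x] xF FX P_carr by auto
      ultimately show ?thesis using xF FX p'(4) g(2) by (auto simp: p_def)
    qed
  qed
  show ?case using pcont p0 pH p1 by blast
qed

lemma H_sub_c: "H \<subseteq> connected_component_of_set tau \<one>\<^bsub>CG\<^esub>"
proof
  fix f assume fH: "f \<in> H"
  let ?C = "connected_component_of_set tau \<one>\<^bsub>CG\<^esub>"
  have fC: "f \<in> carrier CG" using fH by (simp add: H_def)
  have "f \<in> tau closure_of ?C"
    unfolding in_closure_of
  proof (intro conjI allI impI)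
    show "f \<in> topspace tau" using fC top_tau by simp
    fix U assume U: "f \<in> U \<and> openin tau U"
    then obtain V where V: "openin (product_topology (\<lambda>_. T) (topspace X)) V" "U = V \<inter> carrier CG"
      unfolding Cp_topology_def openin_subtopology by blast
    with U obtain W where W: "finite {i \<in> topspace X. W i \<noteq> topspace T}"
      "\<forall>i\<in>topspace X. openin T (W i)" "f \<in> Pi\<^sub>E (topspace X) W" "Pi\<^sub>E (topspace X) W \<subseteq> V"
      unfolding openin_product_topology_alt by blast
    let ?F = "{i \<in> topspace X. W i \<noteq> topspace T}"
    obtain p where p: "continuous_map (top_of_set {0..1::real}) tau p"
     "p 0 = \<one>\<^bsub>CG\<^esub>" "\<forall>t\<in>{0..1}. p t \<in> H" "\<forall>x\<in>?F. p 1 x = f x"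
      using B2[OF W(1) _ fH] by blast
    have "connectedin tau (p ` {0..1})"
      using connectedin_path_image[of tau p] p(1) by (simp add: pathin_def)
    moreover have "\<one>\<^bsub>CG\<^esub> \<in> p ` {0..1}" using p(2) by force
    ultimately have "p ` {0..1} \<subseteq> ?C" by (rule connected_component_of_maximal)
    moreover have "p 1 \<in> p ` {0..1}" by auto
    ultimately have p1C: "p 1 \<in> ?C" by (rule subsetD)
    have p1H: "p 1 \<in> carrier CG" using p(3) by (auto simp: H_def)
    have "p 1 \<in> Pi\<^sub>E (topspace X) W"
    proof (subst PiE_iff, intro conjI ballI)
      show "p 1 \<in> extensional (topspace X)" using p1H by (simp add: carrier_CG_iff)
      fix i assume i: "i \<in> topspace X"
      show "p 1 i \<in> W i"
      proof (cases "i \<in> ?F")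
        case True
        then show ?thesis using p(4) W(3) i by (auto simp: PiE_iff)
      next
        case False
        then have "W i = topspace T" using i by blast
        then show ?thesis using cont_val[OF p1H i] top by simp
      qed
    qed
    then have "p 1 \<in> U" using W(4) V(2) p1H by blast
    then show "\<exists>y. y \<in> ?C \<and> y \<in> U" using p1C by blast
  qed
  moreover have "tau closure_of ?C = ?C"
    by (rule closure_of_closedin[OF closedin_connected_component_of])
  ultimately show "f \<in> ?C" by simp
qed

lemma H_eq: "connected_component_of_set tau \<one>\<^bsub>CG\<^esub> = H"
  using H_sub_c c_sub_H by blast

lemma comp_of:
  assumes "C \<in> connected_components_of X" "x \<in> C"
  shows "connected_component_of_set X x = C"
proof -
  obtain z where z: "z \<in> topspace X" "C = connected_component_of_set X z"
    using assms(1) unfolding connected_components_of_def by blast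
  then have "connected_component_of X z x" using assms(2) by simp
  then show ?thesis using z(2) connected_component_of_equiv by metis
qed

lemma K:
  assumes f: "f \<in> carrier CG" and xy: "connected_component_of X x y"
  shows "P #> f x = P #> f y"
proof -
  interpret group G by (rule grp)
  have x: "x \<in> topspace X" and y: "y \<in> topspace X" using xy connected_component_in_topspace by metis+
  have fx: "f x \<in> carrier G" and fy: "f y \<in> carrier G" using cont_val[OF f] x y by auto
  have cf: "continuous_map X T f" using f by (simp add: carrier_CG_iff)
  have cm: "continuous_map X T (\<lambda>z. f z \<otimes> inv (f x))"
    by (rule tg_mult[OF TG cf]) (use top fx in simp)
  obtain S where S: "connectedin X S" "x \<in> S" "y \<in> S" using xy unfolding connected_component_of_def by blast
  have "connectedin T ((\<lambda>z. f z \<otimes> inv (f x)) ` S)" by (rule connectedin_continuous_map_image[OF cm S(1)])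
  moreover have "\<one> \<in> (\<lambda>z. f z \<otimes> inv (f x)) ` S" using S(2) fx by (metis image_eqI r_inv)
  moreover have "f y \<otimes> inv (f x) \<in> (\<lambda>z. f z \<otimes> inv (f x)) ` S" using S(3) by blast
  ultimately have "f y \<otimes> inv (f x) \<in> P" unfolding connected_component_of_def by blast
  then show ?thesis using cosetEq[OF fx fy] by simp
qed

lemma Hcos_sub:
  assumes f: "f \<in> carrier CG" and g: "g \<in> carrier CG"
    and d: "\<And>x. x \<in> topspace X \<Longrightarrow> g x \<otimes> inv (f x) \<in> P"
  shows "H #>\<^bsub>CG\<^esub> g \<subseteq> H #>\<^bsub>CG\<^esub> f"
proof
  interpret group G by (rule grp)
  fix k assume "k \<in> H #>\<^bsub>CG\<^esub> g"
  then obtain h where h: "h \<in> H" "k = h \<otimes>\<^bsub>CG\<^esub> g" unfolding r_coset_def by blast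
  have hC: "h \<in> carrier CG" and hP: "\<And>x. x \<in> topspace X \<Longrightarrow> h x \<in> P" using h(1) by (auto simp: H_def)
  define h' where "h' = restrict (\<lambda>x. h x \<otimes> (g x \<otimes> inv (f x))) (topspace X)"
  have "continuous_map X T (\<lambda>x. h x \<otimes> (g x \<otimes> inv (f x)))"
    using f g hC by (auto simp: carrier_CG_iff intro!: tg_mult[OF TG] tg_inv[OF TG])
  then have h'C: "h' \<in> carrier CG" unfolding h'_def carrier_CG_iff by (simp add: cont_restrict)
  have "h' \<in> H" unfolding H_def using h'C hP d subgroup.m_closed[OF subP] by (auto simp: h'_def)
  moreover have "h' \<otimes>\<^bsub>CG\<^esub> f = k"
  proof -
    have "h x \<otimes> (g x \<otimes> inv (f x)) \<otimes> f x = h x \<otimes> g x" if x: "x \<in> topspace X" for x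
    proof -
      have "h x \<in> carrier G" "g x \<in> carrier G" "f x \<in> carrier G"
        using cont_val f g hC x by auto
      then show ?thesis by (simp add: m_assoc)
    qed
    then show ?thesis unfolding h(2) h'_def mult_CG by (auto simp: fun_eq_iff)
  qed
  ultimately show "k \<in> H #>\<^bsub>CG\<^esub> f" unfolding r_coset_def by blast
qed

lemma Hcos_eq:
  assumes f: "f \<in> carrier CG" and g: "g \<in> carrier CG"
  shows "H #>\<^bsub>CG\<^esub> f = H #>\<^bsub>CG\<^esub> g \<longleftrightarrow> (\<forall>x\<in>topspace X. P #> f x = P #> g x)"
proof
  interpret group G by (rule grp)
  assume eq: "H #>\<^bsub>CG\<^esub> f = H #>\<^bsub>CG\<^esub> g"
  have "g \<in> H #>\<^bsub>CG\<^esub> g"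
    unfolding r_coset_def using one_H one_mult_CG[OF g] by force
  then have "g \<in> H #>\<^bsub>CG\<^esub> f" using eq by simp
  then obtain h where h: "h \<in> H" "g = h \<otimes>\<^bsub>CG\<^esub> f" unfolding r_coset_def by blast
  show "\<forall>x\<in>topspace X. P #> f x = P #> g x"
  proof
    fix x assume x: "x \<in> topspace X"
    have hx: "h x \<in> P" using h(1) x by (auto simp: H_def)
    have gx: "g x = h x \<otimes> f x" using h(2) x by (simp add: mult_CG)
    have c: "h x \<in> carrier G" "f x \<in> carrier G" using hx P_carr cont_val[OF f x] by auto
    have "g x \<otimes> inv (f x) = h x" unfolding gx using c by (simp add: m_assoc)
    then show "P #> f x = P #> g x" using cosetEq[OF c(2) cont_val[OF g x]] hx by simp
  qed
next
  assume eq: "\<forall>x\<in>topspace X. P #> f x = P #> g x"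
  show "H #>\<^bsub>CG\<^esub> f = H #>\<^bsub>CG\<^esub> g"
  proof
    show "H #>\<^bsub>CG\<^esub> g \<subseteq> H #>\<^bsub>CG\<^esub> f"
      by (rule Hcos_sub[OF f g]) (use eq cosetEq cont_val f g in blast)
    show "H #>\<^bsub>CG\<^esub> f \<subseteq> H #>\<^bsub>CG\<^esub> g"
      by (rule Hcos_sub[OF g f]) (use eq cosetEq cont_val f g in metis)
  qed
qed

lemma lemmaM:
  assumes fin: "finite (connected_components_of X)"
  shows "card (rcosets\<^bsub>CG\<^esub> (connected_component_of_set tau \<one>\<^bsub>CG\<^esub>)) =
         card (rcosets P) ^ card (connected_components_of X)"
proof -
  interpret group G by (rule grp)
  let ?K = "connected_components_of X"
  define rep where "rep C = (SOME x. x \<in> C \<inter> topspace X)" for C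
  have rep: "rep C \<in> C" if "C \<in> ?K" for C
  proof -
    have "C \<inter> topspace X \<noteq> {}"
      using nonempty_connected_components_of[OF that] connected_components_of_subset[OF that] by blast
    then obtain z where "z \<in> C \<inter> topspace X" by blast
    then have "rep C \<in> C \<inter> topspace X" unfolding rep_def by (rule someI)
    then show ?thesis by blast
  qed
  define Phi where "Phi f = (\<lambda>C\<in>?K. P #>\<^bsub>G\<^esub> f (rep C))" for f
  have Phi_pt: "Phi f (connected_component_of_set X x) = P #> f x"
    if f: "f \<in> carrier CG" and x: "x \<in> topspace X" for f x
  proof -
    let ?C = "connected_component_of_set X x"
    have C: "?C \<in> ?K" using x by (simp add: connected_component_in_connected_components_of)
    have "connected_component_of X x (rep ?C)" using rep[OF C] by simp
    then show ?thesis unfolding Phi_def using C K[OF f] by simp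
  qed
  have M1: "H #>\<^bsub>CG\<^esub> f = H #>\<^bsub>CG\<^esub> g \<longleftrightarrow> Phi f = Phi g"
    if f: "f \<in> carrier CG" and g: "g \<in> carrier CG" for f g
    unfolding Hcos_eq[OF f g]
  proof
    assume "\<forall>x\<in>topspace X. P #> f x = P #> g x"
    then show "Phi f = Phi g" unfolding Phi_def
      using rep connected_components_of_subset by (fastforce simp: fun_eq_iff)
  next
    assume "Phi f = Phi g"
    then show "\<forall>x\<in>topspace X. P #> f x = P #> g x" using Phi_pt f g by metis
  qed
  have M2: "Phi ` carrier CG = (?K \<rightarrow>\<^sub>E rcosets P)"
  proof
    show "Phi ` carrier CG \<subseteq> (?K \<rightarrow>\<^sub>E rcosets P)"
    proof
      fix w assume "w \<in> Phi ` carrier CG"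
      then obtain f where f: "f \<in> carrier CG" "w = Phi f" by blast
      have "P #> f (rep C) \<in> rcosets P" if "C \<in> ?K" for C
        using rcosetsI[OF P_carr cont_val[OF f(1)]] rep[OF that] connected_components_of_subset[OF that] by blast
      then show "w \<in> (?K \<rightarrow>\<^sub>E rcosets P)" unfolding f(2) Phi_def by auto
    qed
    show "(?K \<rightarrow>\<^sub>E rcosets P) \<subseteq> Phi ` carrier CG"
    proof
      fix w assume w: "w \<in> (?K \<rightarrow>\<^sub>E rcosets P)"
      define r where "r c = (SOME y. y \<in> c \<inter> carrier G)" for c
      have r: "r c \<in> carrier G \<and> P #> r c = c" if "c \<in> rcosets P" for c
      proof -
        have "c \<in> (\<Union>a\<in>carrier G. {P #> a})" using that by (simp only: RCOSETS_def)
        then obtain a where a0: "a \<in> carrier G" "c \<in> {P #> a}" by (rule UN_E)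
        then have a: "a \<in> carrier G" "c = P #> a" by simp_all
        have "a \<in> c" using rcos_self[OF a(1) subP] a(2) by simp
        then have "a \<in> c \<inter> carrier G" using a(1) by blast
        then have rc': "r c \<in> c \<inter> carrier G" unfolding r_def by (rule someI)
        then have rc: "r c \<in> c" by blast
        have "r c \<in> carrier G" using rc' by blast
        moreover have "P #> a = P #> r c" using repr_independence[OF _ a(1) subP] rc a(2) by metis
        then have "P #> r c = c" using a(2) by metis
        ultimately show ?thesis by (rule conjI)
      qed
      define f where "f = restrict (\<lambda>x. r (w (connected_component_of_set X x))) (topspace X)"
      have wC: "w (connected_component_of_set X x) \<in> rcosets P" if "x \<in> topspace X" for x
        using PiE_mem[OF w] that connected_component_in_connected_components_of[of X x] by metis
      have fcont: "continuous_map X T (\<lambda>x. r (w (connected_component_of_set X x)))"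
      proof (rule loc_const_cont)
        show "(\<lambda>x. r (w (connected_component_of_set X x))) \<in> topspace X \<rightarrow> topspace T"
          using r wC top by auto
        fix x assume x: "x \<in> topspace X"
        let ?C = "connected_component_of_set X x"
        have C: "?C \<in> ?K" using x by (simp add: connected_component_in_connected_components_of)
        have "openin X ?C" by (rule open_in_finite_connected_components[OF fin C])
        moreover have "x \<in> ?C" using x by (simp add: connected_component_of_refl)
        moreover have "\<forall>y\<in>?C. r (w (connected_component_of_set X y)) = r (w ?C)"
          using comp_of[OF C] by simp
        ultimately show "\<exists>U. openin X U \<and> x \<in> U \<and>
            (\<forall>y\<in>U. r (w (connected_component_of_set X y)) = r (w (connected_component_of_set X x)))"
          by blast
      qed
      have fC: "f \<in> carrier CG" unfolding f_def carrier_CG_iff using cont_restrict[OF fcont] by simp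
      have "Phi f = w"
      proof
        fix C
        show "Phi f C = w C"
        proof (cases "C \<in> ?K")
          case True
          have rC: "rep C \<in> topspace X" using rep[OF True] connected_components_of_subset[OF True] by blast
          have "connected_component_of_set X (rep C) = C" by (rule comp_of[OF True rep[OF True]])
          then show ?thesis unfolding Phi_def f_def using True rC r wC[OF rC] by simp
        next
          case False
          then show ?thesis using w unfolding Phi_def by (auto simp: PiE_def extensional_def)
        qed
      qed
      then show "w \<in> Phi ` carrier CG" using fC by blast
    qed
  qed
  have "rcosets\<^bsub>CG\<^esub> (connected_component_of_set tau \<one>\<^bsub>CG\<^esub>) = (\<lambda>f. H #>\<^bsub>CG\<^esub> f) ` carrier CG"
    unfolding H_eq RCOSETS_def by blast
  then have "card (rcosets\<^bsub>CG\<^esub> (connected_component_of_set tau \<one>\<^bsub>CG\<^esub>)) = card (Phi ` carrier CG)"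
    using card_quot[of "carrier CG" "\<lambda>f. H #>\<^bsub>CG\<^esub> f" Phi] M1 by simp
  also have "\<dots> = card (rcosets P) ^ card ?K"
    unfolding M2 by (simp add: card_PiE fin)
  finally show ?thesis .
qed

end

theorem proposition8p6:
  fixes X :: "'a topology" and G :: "('g, 'b) monoid_scheme" and T :: "'g topology"
    and m n :: nat
  assumes "m \<ge> 1" and "n \<ge> 2"
    and "topological_group G T"
    and "path_component_of_set T \<one>\<^bsub>G\<^esub> = connected_component_of_set T \<one>\<^bsub>G\<^esub>"
    and "card (rcosets\<^bsub>G\<^esub> (connected_component_of_set T \<one>\<^bsub>G\<^esub>)) = n"
    and "tychonoff_space X" and "topspace X \<noteq> {}"
  shows "card (connected_components_of X) = m \<longleftrightarrow>
         card (rcosets\<^bsub>Cp_group X G T\<^esub>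
                 (connected_component_of_set (Cp_topology X G T) \<one>\<^bsub>Cp_group X G T\<^esub>)) = n ^ m"
proof -
  interpret cpB X G T
    by unfold_locales (use assms(3,4,6) in auto)
  interpret group G by (rule grp)
  have n: "card (rcosets\<^bsub>G\<^esub> P) = n" using assms(5) .
  show ?thesis
  proof
    assume m: "card (connected_components_of X) = m"
    then have "finite (connected_components_of X)" using assms(1) card_gt_0_iff by fastforce
    then show "card (rcosets\<^bsub>CG\<^esub> (connected_component_of_set tau \<one>\<^bsub>CG\<^esub>)) = n ^ m"
      using lemmaM n m by simp
  next
    assume e: "card (rcosets\<^bsub>CG\<^esub> (connected_component_of_set tau \<one>\<^bsub>CG\<^esub>)) = n ^ m"
    have "n ^ m > 0" using assms(2) by simp
    then have fin: "finite (rcosets\<^bsub>CG\<^esub> (connected_component_of_set tau \<one>\<^bsub>CG\<^esub>))"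
      using e card_gt_0_iff by metis
    have "\<exists>a. a \<in> carrier G \<and> a \<notin> P"
    proof (rule ccontr)
      assume "\<not> (\<exists>a. a \<in> carrier G \<and> a \<notin> P)"
      then have cP: "\<And>a. a \<in> carrier G \<Longrightarrow> a \<in> P" by blast
      have "rcosets\<^bsub>G\<^esub> P = {P}"
      proof
        show "rcosets\<^bsub>G\<^esub> P \<subseteq> {P}"
        proof
          fix c assume "c \<in> rcosets\<^bsub>G\<^esub> P"
          then have "c \<in> (\<Union>a\<in>carrier G. {P #>\<^bsub>G\<^esub> a})" by (simp only: RCOSETS_def)
          then obtain a where a0: "a \<in> carrier G" "c \<in> {P #>\<^bsub>G\<^esub> a}" by (rule UN_E)
          then have "c = P #>\<^bsub>G\<^esub> a" by simp
          also have "\<dots> = P" using coset_join2[OF a0(1) subP cP[OF a0(1)]] .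
          finally show "c \<in> {P}" by simp
        qed
        have "P #>\<^bsub>G\<^esub> \<one>\<^bsub>G\<^esub> = P" using coset_join2[OF one_closed subP one_P] .
        then show "{P} \<subseteq> rcosets\<^bsub>G\<^esub> P" using rcosetsI[OF P_carr one_closed] by simp
      qed
      then have "card (rcosets\<^bsub>G\<^esub> P) = 1" by simp
      then show False using n assms(2) by simp
    qed
    then obtain a where a: "a \<in> carrier G" "a \<notin> P" by blast
    have finK: "finite (connected_components_of X)" by (rule lemmaI[OF fin a])
    have "n ^ card (connected_components_of X) = n ^ m" using lemmaM[OF finK] n e by simp
    then show "card (connected_components_of X) = m" using assms(2) by simp
  qed
qed

end
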